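(* Let $M$ be a connected two-dimensional manifold and $f:M\to\mathbb{R}^{0,2,1}$ a non-degenerate immersion. Suppose there is $\lambda\in C^\infty(M)$ with $h=\lambda g$, and suppose $f$ is not $d$-totally geodesic, i.e. $h\not\equiv0$. Then $\lambda$ is a nonzero constant. Moreover, there are constants $A,B,C\in\mathbb{R}$ such that $f(M)$ is an open subset of the paraboloid of revolution $$\left\{\left(u,v,\tfrac{\lambda}{2}(u^2+v^2)+Au+Bv+C\right)\ :\ (u,v)\in\mathbb{R}^2\right\}.$$ In particular, up to an affine isometry of $\mathbb{R}^{0,2,1}$, $f(M)$ is an open subset of $\{(u,v,u^2+v^2):(u,v)\in\mathbb{R}^2\}$.
   Context: $\mathbb{R}^{0,2,1}$ denotes $\mathbb{R}^3$ with coordinates $(x,y,z)$ and the degenerate form $(\cdot,\cdot)=dx^2+dy^2$. A non-degenerate immersion is a $C^\infty$ immersion $f:M\to\mathbb{R}^{0,2,1}$ of a 2-manifold whose induced metric $g=f^*(\cdot,\cdot)$ is positive definite. Let $\xi=(0,0,1)$ and let $d$ be the standard flat connection of $\mathbb{R}^3$ (componentwise differentiation). Since $\mathbb{R}^3=df(T_pM)\oplus\mathbb{R}\xi$, one can decompose $d_X(df(Y))=df(\nabla_XY)+h(X,Y)\xi$, where $\nabla$ is the Levi-Civita connection of $g$ and $h$ is a symmetric $(0,2)$-tensor called the second fundamental form. $f$ is $d$-totally geodesic if $h\equiv0$. An affine isometry of $\mathbb{R}^{0,2,1}$ is a map $p\mapsto Pp+b$ with $b\in\mathbb{R}^3$ and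 $P=\begin{pmatrix}T&0\\ (a\ \ b')&c\end{pmatrix}$, where $T\in O(2)$, $a,b',c\in\mathbb{R}$ and $c\neq0$. *)

theory Defs
  imports "HOL-Analysis.Analysis"
begin

fun Ck :: "nat \<Rightarrow> (real \<times> real) set \<Rightarrow> (real \<times> real \<Rightarrow> 'b::real_normed_vector) \<Rightarrow> bool" where
  "Ck 0 U F = continuous_on U F"
| "Ck (Suc n) U F = (F differentiable_on U \<and> (\<forall>v. Ck n U (\<lambda>x. frechet_derivative F (at x) v)))"

definition smooth_on_R2 :: "(real \<times> real) set \<Rightarrow> (real \<times> real \<Rightarrow> 'b::real_normed_vector) \<Rightarrow> bool" where
  "smooth_on_R2 U F \<longleftrightarrow> (\<forall>n. Ck n U F)"

definition is_chart :: "('m::topological_space set \<times> ('m \<Rightarrow> real \<times> real)) \<Rightarrow> bool" where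
  "is_chart c \<longleftrightarrow> (let U = fst c; \<phi> = snd c in
     open U \<and> open (\<phi> ` U) \<and> inj_on \<phi> U \<and> continuous_on U \<phi> \<and>
     continuous_on (\<phi> ` U) (inv_into U \<phi>))"

text \<open>A smooth atlas on the whole space (M = UNIV of type 'm).\<close>
definition smooth_atlas :: "('m::topological_space set \<times> ('m \<Rightarrow> real \<times> real)) set \<Rightarrow> bool" where
  "smooth_atlas \<A> \<longleftrightarrow>
     (\<forall>c\<in>\<A>. is_chart c) \<and> (\<Union>c\<in>\<A>. fst c) = UNIV \<and>
     (\<forall>c\<in>\<A>. \<forall>d\<in>\<A>.
        smooth_on_R2 (snd c ` (fst c \<inter> fst d)) (snd d \<circ> inv_into (fst c) (snd c)))"

definition smooth_map :: "('m::topological_space set \<times> ('m \<Rightarrow> real \<times> real)) set \<Rightarrow> ('m \<Rightarrow> 'b::real_normed_vector) \<Rightarrow> bool" where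
  "smooth_map \<A> F \<longleftrightarrow> (\<forall>c\<in>\<A>. smooth_on_R2 (snd c ` fst c) (F \<circ> inv_into (fst c) (snd c)))"

section \<open>The degenerate space R^{0,2,1} = real x real x real\<close>

definition dform :: "real \<times> real \<times> real \<Rightarrow> real \<times> real \<times> real \<Rightarrow> real" where
  "dform p q = fst p * fst q + fst (snd p) * fst (snd q)"

definition xi :: "real \<times> real \<times> real" where
  "xi = (0, 0, 1)"

definition loc :: "('m set \<times> ('m \<Rightarrow> real \<times> real)) \<Rightarrow> ('m \<Rightarrow> 'b) \<Rightarrow> real \<times> real \<Rightarrow> 'b" where
  "loc c f = f \<circ> inv_into (fst c) (snd c)"

definition D1 :: "(real \<times> real \<Rightarrow> 'b::real_normed_vector) \<Rightarrow> real \<times> real \<Rightarrow> real \<times> real \<Rightarrow> 'b" where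
  "D1 G x v = frechet_derivative G (at x) v"

definition D2 :: "(real \<times> real \<Rightarrow> 'b::real_normed_vector) \<Rightarrow> real \<times> real \<Rightarrow> real \<times> real \<Rightarrow> real \<times> real \<Rightarrow> 'b" where
  "D2 G x v w = frechet_derivative (\<lambda>y. D1 G y w) (at x) v"

definition immersion :: "('m::topological_space set \<times> ('m \<Rightarrow> real \<times> real)) set \<Rightarrow> ('m \<Rightarrow> real \<times> real \<times> real) \<Rightarrow> bool" where
  "immersion \<A> f \<longleftrightarrow> smooth_map \<A> f \<and>
     (\<forall>c\<in>\<A>. \<forall>x\<in>snd c ` fst c. inj (D1 (loc c f) x))"

text \<open>Induced metric g = f^*(.,.) in chart c at the point with coordinates x, applied to
  coordinate tangent vectors v, w.\<close>
definition ind_metric :: "('m set \<times> ('m \<Rightarrow> real \<times> real)) \<Rightarrow> ('m \<Rightarrow> real \<times> real \<times> real) \<Rightarrow> real \<times> real \<Rightarrow> real \<times> real \<Rightarrow> real \<times> real \<Rightarrow> real" where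
  "ind_metric c f x v w = dform (D1 (loc c f) x v) (D1 (loc c f) x w)"

definition nondeg_immersion :: "('m::topological_space set \<times> ('m \<Rightarrow> real \<times> real)) set \<Rightarrow> ('m \<Rightarrow> real \<times> real \<times> real) \<Rightarrow> bool" where
  "nondeg_immersion \<A> f \<longleftrightarrow> immersion \<A> f \<and>
     (\<forall>c\<in>\<A>. \<forall>x\<in>snd c ` fst c. \<forall>v. v \<noteq> 0 \<longrightarrow> ind_metric c f x v v > 0)"

text \<open>Second fundamental form: the xi-component of d_X df(Y) in the decomposition
  R^3 = df(T_pM) + R xi (in chart coordinates).\<close>
definition sff :: "('m set \<times> ('m \<Rightarrow> real \<times> real)) \<Rightarrow> ('m \<Rightarrow> real \<times> real \<times> real) \<Rightarrow> real \<times> real \<Rightarrow> real \<times> real \<Rightarrow> real \<times> real \<Rightarrow> real" where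
  "sff c f x v w = (THE t. D2 (loc c f) x v w - t *\<^sub>R xi \<in> range (D1 (loc c f) x))"

definition affine_isometry :: "(real \<times> real \<times> real \<Rightarrow> real \<times> real \<times> real) \<Rightarrow> bool" where
  "affine_isometry \<Phi> \<longleftrightarrow> (\<exists>t11 t12 t21 t22 a b' c b1 b2 b3 :: real.
     t11\<^sup>2 + t21\<^sup>2 = 1 \<and> t12\<^sup>2 + t22\<^sup>2 = 1 \<and> t11 * t12 + t21 * t22 = 0 \<and> c \<noteq> 0 \<and>
     \<Phi> = (\<lambda>(x, y, z). (t11 * x + t12 * y + b1, t21 * x + t22 * y + b2, a * x + b' * y + c * z + b3)))"

end

theory Submission
  imports Defs
begin


lemma line_deriv:
  fixes g :: "real \<times> real \<Rightarrow> real"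
  assumes "(g has_derivative G) (at (a + t *\<^sub>R u))"
  shows "((\<lambda>s. g (a + s *\<^sub>R u)) has_real_derivative G u) (at t)"
proof -
  have l: "bounded_linear G" using assms has_derivative_bounded_linear by blast
  have d1: "((\<lambda>s. a + s *\<^sub>R u) has_derivative (\<lambda>s. s *\<^sub>R u)) (at t)"
    by (auto intro!: derivative_eq_intros)
  have "((\<lambda>s. g (a + s *\<^sub>R u)) has_derivative (\<lambda>s. G (s *\<^sub>R u))) (at t)"
    using has_derivative_compose[OF d1 assms] by (simp add: o_def)
  moreover have "(\<lambda>s. G (s *\<^sub>R u)) = (\<lambda>s. G u * s)"
    using linear_simps(5)[OF l] by (auto simp: mult.commute)
  ultimately show ?thesis by (simp add: has_field_derivative_def)
qed

lemma rect:
  fixes g :: "real \<times> real \<Rightarrow> real"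
  assumes dg: "\<forall>x\<in>V. (g has_derivative G x) (at x)"
    and dG: "\<forall>x\<in>V. \<forall>w. ((\<lambda>y. G y w) has_derivative (\<lambda>v. H x v w)) (at x)"
    and s: "s > 0"
    and box: "\<And>\<sigma> \<tau>. 0 \<le> \<sigma> \<Longrightarrow> \<sigma> \<le> s \<Longrightarrow> 0 \<le> \<tau> \<Longrightarrow> \<tau> \<le> s \<Longrightarrow> a + \<sigma> *\<^sub>R u + \<tau> *\<^sub>R w \<in> V"
  shows "\<exists>\<sigma> \<tau>. 0 < \<sigma> \<and> \<sigma> < s \<and> 0 < \<tau> \<and> \<tau> < s \<and>
     g (a + s *\<^sub>R u + s *\<^sub>R w) - g (a + s *\<^sub>R u) - g (a + s *\<^sub>R w) + g a
       = s * s * H (a + \<sigma> *\<^sub>R u + \<tau> *\<^sub>R w) w u"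
proof -
  define \<phi> where "\<phi> \<sigma> = g (a + \<sigma> *\<^sub>R u + s *\<^sub>R w) - g (a + \<sigma> *\<^sub>R u)" for \<sigma>
  have "\<And>\<sigma>. 0 \<le> \<sigma> \<Longrightarrow> \<sigma> \<le> s \<Longrightarrow> (\<phi> has_real_derivative
          (G (a + \<sigma> *\<^sub>R u + s *\<^sub>R w) u - G (a + \<sigma> *\<^sub>R u) u)) (at \<sigma>)"
  proof -
    fix \<sigma> assume h0: "0 \<le> \<sigma>" "\<sigma> \<le> s"
    then have h: "0 \<le> \<sigma> \<and> \<sigma> \<le> s" by auto
    have i1: "a + \<sigma> *\<^sub>R u + s *\<^sub>R w \<in> V" using box h s by auto
    have i2: "a + \<sigma> *\<^sub>R u \<in> V" using box[of \<sigma> 0] h s by auto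
    have d1: "((\<lambda>t. g ((a + s *\<^sub>R w) + t *\<^sub>R u)) has_real_derivative G (a + \<sigma> *\<^sub>R u + s *\<^sub>R w) u) (at \<sigma>)"
      by (rule line_deriv) (use dg i1 in \<open>auto simp: algebra_simps\<close>)
    have d2: "((\<lambda>t. g (a + t *\<^sub>R u)) has_real_derivative G (a + \<sigma> *\<^sub>R u) u) (at \<sigma>)"
      by (rule line_deriv) (use dg i2 in auto)
    show "(\<phi> has_real_derivative (G (a + \<sigma> *\<^sub>R u + s *\<^sub>R w) u - G (a + \<sigma> *\<^sub>R u) u)) (at \<sigma>)"
      unfolding \<phi>_def using DERIV_diff[OF d1 d2] by (simp add: algebra_simps)
  qed
  from MVT2[OF s this] obtain \<sigma> where \<sigma>: "0 < \<sigma>" "\<sigma> < s"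
    "\<phi> s - \<phi> 0 = s * (G (a + \<sigma> *\<^sub>R u + s *\<^sub>R w) u - G (a + \<sigma> *\<^sub>R u) u)" by auto
  define \<psi> where "\<psi> \<tau> = G (a + \<sigma> *\<^sub>R u + \<tau> *\<^sub>R w) u" for \<tau>
  have "\<And>\<tau>. 0 \<le> \<tau> \<Longrightarrow> \<tau> \<le> s \<Longrightarrow> (\<psi> has_real_derivative H (a + \<sigma> *\<^sub>R u + \<tau> *\<^sub>R w) w u) (at \<tau>)"
  proof -
    fix \<tau> assume h0: "0 \<le> \<tau>" "\<tau> \<le> s"
    then have h: "0 \<le> \<tau> \<and> \<tau> \<le> s" by auto
    have i1: "a + \<sigma> *\<^sub>R u + \<tau> *\<^sub>R w \<in> V" using box h \<sigma> by auto
    show "(\<psi> has_real_derivative H (a + \<sigma> *\<^sub>R u + \<tau> *\<^sub>R w) w u) (at \<tau>)"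
    proof -
      have "((\<lambda>y. G y u) has_derivative (\<lambda>v. H (a + \<sigma> *\<^sub>R u + \<tau> *\<^sub>R w) v u)) (at (a + \<sigma> *\<^sub>R u + \<tau> *\<^sub>R w))"
        using dG i1 by blast
      from line_deriv[of "\<lambda>y. G y u" _ "a + \<sigma> *\<^sub>R u" \<tau> w] this show ?thesis unfolding \<psi>_def by blast
    qed
  qed
  from MVT2[OF s this] obtain \<tau> where \<tau>: "0 < \<tau>" "\<tau> < s"
    "\<psi> s - \<psi> 0 = s * H (a + \<sigma> *\<^sub>R u + \<tau> *\<^sub>R w) w u" by auto
  show ?thesis
    apply (rule exI[of _ \<sigma>], rule exI[of _ \<tau>])
    using \<sigma> \<tau> unfolding \<phi>_def \<psi>_def by (auto simp: algebra_simps)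
qed

lemma schwarz:
  fixes g :: "real \<times> real \<Rightarrow> real"
  assumes V: "open V" and a: "a \<in> V"
    and dg: "\<forall>x\<in>V. (g has_derivative G x) (at x)"
    and dG: "\<forall>x\<in>V. \<forall>w. ((\<lambda>y. G y w) has_derivative (\<lambda>v. H x v w)) (at x)"
    and cont: "\<And>v w. continuous (at a) (\<lambda>x. H x v w)"
  shows "H a (1,0) (0,1) = H a (0,1) (1,0)"
proof (rule ccontr)
  assume ne: "H a (1,0) (0,1) \<noteq> H a (0,1) (1,0)"
  define d where "d = \<bar>H a (1,0) (0,1) - H a (0,1) (1,0)\<bar>"
  have d: "d > 0" using ne d_def by auto
  obtain r where r: "r > 0" "ball a r \<subseteq> V" using V a openE by blast
  obtain \<delta>1 where \<delta>1: "\<delta>1 > 0" "\<forall>x. dist x a < \<delta>1 \<longrightarrow> dist (H x (1,0) (0,1)) (H a (1,0) (0,1)) < d/2"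
    using cont[of "(1,0)" "(0,1)", unfolded continuous_at_eps_delta] d by (meson half_gt_zero)
  obtain \<delta>2 where \<delta>2: "\<delta>2 > 0" "\<forall>x. dist x a < \<delta>2 \<longrightarrow> dist (H x (0,1) (1,0)) (H a (0,1) (1,0)) < d/2"
    using cont[of "(0,1)" "(1,0)", unfolded continuous_at_eps_delta] d by (meson half_gt_zero)
  define s where "s = min r (min \<delta>1 \<delta>2) / 3"
  have s: "s > 0" using r \<delta>1 \<delta>2 s_def by auto
  have near: "dist (a + \<sigma> *\<^sub>R u + \<tau> *\<^sub>R w) a < min r (min \<delta>1 \<delta>2)"
    if "0 \<le> \<sigma>" "\<sigma> \<le> s" "0 \<le> \<tau>" "\<tau> \<le> s" "(u = (1,0) \<and> w = (0,1)) \<or> (u = (0,1) \<and> w = (1,0))"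
    for \<sigma> \<tau> u w
  proof -
    have "dist (a + \<sigma> *\<^sub>R u + \<tau> *\<^sub>R w) a = norm (\<sigma> *\<^sub>R u + \<tau> *\<^sub>R w)"
      by (simp add: dist_norm)
    also have "\<dots> \<le> norm (\<sigma> *\<^sub>R u) + norm (\<tau> *\<^sub>R w)" by (rule norm_triangle_ineq)
    also have "\<dots> = \<sigma> + \<tau>" using that by auto
    also have "\<dots> < min r (min \<delta>1 \<delta>2)" using that s s_def by auto
    finally show ?thesis .
  qed
  have box: "a + \<sigma> *\<^sub>R u + \<tau> *\<^sub>R w \<in> V"
    if "0 \<le> \<sigma>" "\<sigma> \<le> s" "0 \<le> \<tau>" "\<tau> \<le> s" "(u = (1,0) \<and> w = (0,1)) \<or> (u = (0,1) \<and> w = (1,0))"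
    for \<sigma> \<tau> u w
  proof -
    have "a + \<sigma> *\<^sub>R u + \<tau> *\<^sub>R w \<in> ball a r" using near[OF that] by (simp add: dist_commute)
    then show ?thesis using r(2) by blast
  qed
  obtain \<sigma>1 \<tau>1 where 1: "0 < \<sigma>1" "\<sigma>1 < s" "0 < \<tau>1" "\<tau>1 < s"
     "g (a + s *\<^sub>R (1,0) + s *\<^sub>R (0,1)) - g (a + s *\<^sub>R (1,0)) - g (a + s *\<^sub>R (0,1)) + g a
       = s * s * H (a + \<sigma>1 *\<^sub>R (1,0) + \<tau>1 *\<^sub>R (0,1)) (0,1) (1,0)"
    using rect[OF dg dG s, of a "(1,0)" "(0,1)"] box[of _ _ "(1,0)" "(0,1)"] by blast
  obtain \<sigma>2 \<tau>2 where 2: "0 < \<sigma>2" "\<sigma>2 < s" "0 < \<tau>2" "\<tau>2 < s"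
     "g (a + s *\<^sub>R (0,1) + s *\<^sub>R (1,0)) - g (a + s *\<^sub>R (0,1)) - g (a + s *\<^sub>R (1,0)) + g a
       = s * s * H (a + \<sigma>2 *\<^sub>R (0,1) + \<tau>2 *\<^sub>R (1,0)) (1,0) (0,1)"
    using rect[OF dg dG s, of a "(0,1)" "(1,0)"] box[of _ _ "(0,1)" "(1,0)"] by blast
  have eq: "H (a + \<sigma>1 *\<^sub>R (1,0) + \<tau>1 *\<^sub>R (0,1)) (0,1) (1,0) = H (a + \<sigma>2 *\<^sub>R (0,1) + \<tau>2 *\<^sub>R (1,0)) (1,0) (0,1)"
  proof -
    have "s * s * H (a + \<sigma>1 *\<^sub>R (1,0) + \<tau>1 *\<^sub>R (0,1)) (0,1) (1,0) = s * s * H (a + \<sigma>2 *\<^sub>R (0,1) + \<tau>2 *\<^sub>R (1,0)) (1,0) (0,1)"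
      using 1(5) 2(5) by (simp add: algebra_simps)
    then show ?thesis using s by simp
  qed
  have n1: "dist (a + \<sigma>1 *\<^sub>R (1,0) + \<tau>1 *\<^sub>R (0,1)) a < \<delta>2"
    using near[of \<sigma>1 \<tau>1 "(1,0)" "(0,1)"] 1 by auto
  have n2: "dist (a + \<sigma>2 *\<^sub>R (0,1) + \<tau>2 *\<^sub>R (1,0)) a < \<delta>1"
    using near[of \<sigma>2 \<tau>2 "(0,1)" "(1,0)"] 2 by auto
  have "dist (H (a + \<sigma>1 *\<^sub>R (1,0) + \<tau>1 *\<^sub>R (0,1)) (0,1) (1,0)) (H a (0,1) (1,0)) < d/2"
    using \<delta>2(2) n1 by blast
  moreover have "dist (H (a + \<sigma>2 *\<^sub>R (0,1) + \<tau>2 *\<^sub>R (1,0)) (1,0) (0,1)) (H a (1,0) (0,1)) < d/2"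
    using \<delta>1(2) n2 by blast
  moreover have "\<And>X Y A B d::real. \<bar>X - B\<bar> < d/2 \<Longrightarrow> \<bar>Y - A\<bar> < d/2 \<Longrightarrow> X = Y \<Longrightarrow> d = \<bar>A - B\<bar> \<Longrightarrow> False"
    by arith
  ultimately show False using eq d_def unfolding dist_real_def by blast
qed




lemma smooth_deriv: "smooth_on_R2 U F \<Longrightarrow> smooth_on_R2 U (\<lambda>x. frechet_derivative F (at x) v)"
  unfolding smooth_on_R2_def
proof
  fix n assume "\<forall>n. Ck n U F"
  then have "Ck (Suc n) U F" by blast
  then show "Ck n U (\<lambda>x. frechet_derivative F (at x) v)" by (cases v) simp
qed

lemma smooth_has_deriv:
  assumes "smooth_on_R2 U F" "open U" "x \<in> U"
  shows "(F has_derivative frechet_derivative F (at x)) (at x)"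
proof -
  have "Ck (Suc 0) U F" using assms(1) unfolding smooth_on_R2_def by blast
  then have "F differentiable_on U" by simp
  then have "F differentiable (at x)"
    using assms(2,3) by (simp add: differentiable_on_eq_differentiable_at)
  then show ?thesis using frechet_derivative_works by blast
qed

lemma smooth_cont:
  assumes "smooth_on_R2 U F" "open U" "x \<in> U"
  shows "isCont F x"
proof -
  have "Ck 0 U F" using assms(1) unfolding smooth_on_R2_def by blast
  then show ?thesis using assms continuous_on_eq_continuous_at by auto
qed

locale chart_ctx =
  fixes V :: "(real \<times> real) set" and F :: "real \<times> real \<Rightarrow> real \<times> real \<times> real"
    and L :: "real \<times> real \<Rightarrow> real"
  assumes V: "open V" and sF: "smooth_on_R2 V F" and sL: "smooth_on_R2 V L"
    and nd: "\<forall>x\<in>V. \<forall>v. v \<noteq> 0 \<longrightarrow> dform (D1 F x v) (D1 F x v) > 0"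
    and um: "\<forall>x\<in>V. \<forall>v w. (THE t. D2 F x v w - t *\<^sub>R xi \<in> range (D1 F x)) = L x * dform (D1 F x v) (D1 F x w)"
begin

lemma dF: "x \<in> V \<Longrightarrow> (F has_derivative D1 F x) (at x)"
  using smooth_has_deriv[OF sF V] unfolding D1_def by (simp add: eta_contract_eq)

lemma D1_eta: "D1 F x = (\<lambda>v. D1 F x v)" by simp

lemma dDF: "x \<in> V \<Longrightarrow> ((\<lambda>y. D1 F y w) has_derivative (\<lambda>v. D2 F x v w)) (at x)"
  using smooth_has_deriv[OF smooth_deriv[OF sF, of w] V] unfolding D1_def D2_def by simp

lemma cD1: "x \<in> V \<Longrightarrow> isCont (\<lambda>y. D1 F y w) x"
  using smooth_cont[OF smooth_deriv[OF sF, of w] V] unfolding D1_def by simp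

lemma cD2: "x \<in> V \<Longrightarrow> isCont (\<lambda>y. D2 F y v w) x"
  using smooth_cont[OF smooth_deriv[OF smooth_deriv[OF sF, of w], of v] V] unfolding D1_def D2_def by simp

lemma dL: "x \<in> V \<Longrightarrow> (L has_derivative D1 L x) (at x)"
  using smooth_has_deriv[OF sL V] unfolding D1_def by (simp add: eta_contract_eq)

lemma cL: "x \<in> V \<Longrightarrow> isCont L x"
  using smooth_cont[OF sL V] by simp

lemma cDL: "x \<in> V \<Longrightarrow> isCont (\<lambda>y. D1 L y w) x"
  using smooth_cont[OF smooth_deriv[OF sL, of w] V] unfolding D1_def by simp

lemma lin: "x \<in> V \<Longrightarrow> bounded_linear (D1 F x)"
  using dF has_derivative_bounded_linear by blast

lemma linL: "x \<in> V \<Longrightarrow> bounded_linear (D1 L x)"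
  using dL has_derivative_bounded_linear by blast

lemma lin2:
  fixes T :: "real \<times> real \<Rightarrow> 'b::real_normed_vector"
  assumes "bounded_linear T"
  shows "T (v1, v2) = v1 *\<^sub>R T (1,0) + v2 *\<^sub>R T (0,1)"
proof -
  have "(v1, v2) = v1 *\<^sub>R (1,0) + v2 *\<^sub>R (0::real,1::real)" by simp
  then have "T (v1, v2) = T (v1 *\<^sub>R (1,0) + v2 *\<^sub>R (0,1))" by metis
  also have "\<dots> = v1 *\<^sub>R T (1,0) + v2 *\<^sub>R T (0,1)"
    by (simp only: linear_add[OF bounded_linear.linear[OF assms]] linear_scale[OF bounded_linear.linear[OF assms]])
  finally show ?thesis .
qed

definition "a11 x = fst (D1 F x (1,0))"
definition "a12 x = fst (D1 F x (0,1))"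
definition "a21 x = fst (snd (D1 F x (1,0)))"
definition "a22 x = fst (snd (D1 F x (0,1)))"
definition "z1 x = snd (snd (D1 F x (1,0)))"
definition "z2 x = snd (snd (D1 F x (0,1)))"
definition "dt x = a11 x * a22 x - a12 x * a21 x"

lemma D1_expand:
  assumes "x \<in> V"
  shows "D1 F x (v1, v2) = (a11 x * v1 + a12 x * v2, a21 x * v1 + a22 x * v2, z1 x * v1 + z2 x * v2)"
  using lin2[OF lin[OF assms], of v1 v2]
  by (simp add: a11_def a12_def a21_def a22_def z1_def z2_def prod_eq_iff algebra_simps)

lemma dt_nz: assumes "x \<in> V" shows "dt x \<noteq> 0"
proof
  assume d0: "dt x = 0"
  have pos: "\<And>v1 v2. (v1, v2) \<noteq> (0,0) \<Longrightarrow> (a11 x * v1 + a12 x * v2)^2 + (a21 x * v1 + a22 x * v2)^2 > 0"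
  proof -
    fix v1 v2 :: real assume "(v1, v2) \<noteq> (0,0)"
    then have "(v1,v2) \<noteq> 0" by (simp add: zero_prod_def)
    then have "dform (D1 F x (v1,v2)) (D1 F x (v1,v2)) > 0" using nd assms by blast
    then show "(a11 x * v1 + a12 x * v2)^2 + (a21 x * v1 + a22 x * v2)^2 > 0"
      by (simp add: D1_expand[OF assms] dform_def power2_eq_square)
  qed
  show False
  proof (cases "(a22 x, - a21 x) = (0,0)")
    case False
    from pos[OF this] d0 show False unfolding dt_def by (simp add: algebra_simps)
  next
    case True
    then have h: "a22 x = 0" "a21 x = 0" by auto
    show False
    proof (cases "(a12 x, - a11 x) = (0,0)")
      case False
      from pos[OF this] h show False by (simp add: algebra_simps)
    next
      case True
      then have "a12 x = 0" "a11 x = 0" by auto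
      with pos[of 1 0] h show False by simp
    qed
  qed
qed

definition "q1 x = (z1 x * a22 x - z2 x * a21 x) / dt x"
definition "q2 x = (a11 x * z2 x - a12 x * z1 x) / dt x"

lemma key1:
  assumes "x \<in> V"
  shows "snd (snd (D1 F x w)) = q1 x * fst (D1 F x w) + q2 x * fst (snd (D1 F x w))"
proof -
  obtain w1 w2 where w: "w = (w1, w2)" by fastforce
  have d: "dt x \<noteq> 0" using dt_nz assms by blast
  have e1: "q1 x * a11 x + q2 x * a21 x = z1 x"
  proof -
    have "(z1 x * a22 x - z2 x * a21 x) * a11 x + (a11 x * z2 x - a12 x * z1 x) * a21 x = z1 x * dt x"
      by (simp add: dt_def algebra_simps)
    then show ?thesis using d unfolding q1_def q2_def by (simp add: field_simps)
  qed
  have e2: "q1 x * a12 x + q2 x * a22 x = z2 x"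
  proof -
    have "(z1 x * a22 x - z2 x * a21 x) * a12 x + (a11 x * z2 x - a12 x * z1 x) * a22 x = z2 x * dt x"
      by (simp add: dt_def algebra_simps)
    then show ?thesis using d unfolding q1_def q2_def by (simp add: field_simps)
  qed
  have "z1 x * w1 + z2 x * w2 = q1 x * (a11 x * w1 + a12 x * w2) + q2 x * (a21 x * w1 + a22 x * w2)"
    by (simp add: e1[symmetric] e2[symmetric] algebra_simps)
  then show ?thesis unfolding w D1_expand[OF assms] by simp
qed


lemma d_fst: "x \<in> V \<Longrightarrow> ((\<lambda>y. fst (D1 F y w)) has_derivative (\<lambda>v. fst (D2 F x v w))) (at x)"
  using has_derivative_fst[OF dDF] by blast
lemma d_fsnd: "x \<in> V \<Longrightarrow> ((\<lambda>y. fst (snd (D1 F y w))) has_derivative (\<lambda>v. fst (snd (D2 F x v w)))) (at x)"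
  using has_derivative_fst[OF has_derivative_snd[OF dDF]] by blast
lemma d_ssnd: "x \<in> V \<Longrightarrow> ((\<lambda>y. snd (snd (D1 F y w))) has_derivative (\<lambda>v. snd (snd (D2 F x v w)))) (at x)"
  using has_derivative_snd[OF has_derivative_snd[OF dDF]] by blast

lemma q_diff: assumes "x \<in> V" shows "q1 differentiable (at x)" "q2 differentiable (at x)"
proof -
  have a: "a11 differentiable (at x)" "a12 differentiable (at x)" "a21 differentiable (at x)"
     "a22 differentiable (at x)" "z1 differentiable (at x)" "z2 differentiable (at x)"
    unfolding a11_def a12_def a21_def a22_def z1_def z2_def
    using d_fst[OF assms] d_fsnd[OF assms] d_ssnd[OF assms] differentiableI by blast+
  have "dt differentiable (at x)" unfolding dt_def[abs_def] using a by (auto intro!: derivative_intros)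
  then show "q1 differentiable (at x)" "q2 differentiable (at x)"
    unfolding q1_def[abs_def] q2_def[abs_def] using a dt_nz[OF assms] by (auto intro!: derivative_intros)
qed

definition "Q1 x = frechet_derivative q1 (at x)"
definition "Q2 x = frechet_derivative q2 (at x)"

lemma hq1: "x \<in> V \<Longrightarrow> (q1 has_derivative Q1 x) (at x)"
  using q_diff frechet_derivative_works Q1_def by metis
lemma hq2: "x \<in> V \<Longrightarrow> (q2 has_derivative Q2 x) (at x)"
  using q_diff frechet_derivative_works Q2_def by metis

lemma deriv_id:
  assumes x: "x \<in> V"
  shows "snd (snd (D2 F x v w)) = Q1 x v * fst (D1 F x w) + q1 x * fst (D2 F x v w)
          + Q2 x v * fst (snd (D1 F x w)) + q2 x * fst (snd (D2 F x v w))"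
proof -
  have R: "((\<lambda>y. q1 y * fst (D1 F y w) + q2 y * fst (snd (D1 F y w))) has_derivative
     (\<lambda>v. Q1 x v * fst (D1 F x w) + q1 x * fst (D2 F x v w)
          + Q2 x v * fst (snd (D1 F x w)) + q2 x * fst (snd (D2 F x v w)))) (at x)"
    using has_derivative_add[OF has_derivative_mult[OF hq1[OF x] d_fst[OF x]]
                                 has_derivative_mult[OF hq2[OF x] d_fsnd[OF x]]]
    by (simp add: algebra_simps)
  have "((\<lambda>y. snd (snd (D1 F y w))) has_derivative
     (\<lambda>v. Q1 x v * fst (D1 F x w) + q1 x * fst (D2 F x v w)
          + Q2 x v * fst (snd (D1 F x w)) + q2 x * fst (snd (D2 F x v w)))) (at x)"
    by (rule has_derivative_transform_within_open[OF R V x]) (simp add: key1)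
  from has_derivative_unique[OF d_ssnd[OF x] this] show ?thesis by meson
qed

lemma surjP:
  assumes x: "x \<in> V"
  shows "\<exists>v. fst (D1 F x v) = y1 \<and> fst (snd (D1 F x v)) = y2"
proof -
  have d: "dt x \<noteq> 0" using dt_nz x by blast
  define v where "v = ((y1 * a22 x - y2 * a12 x) / dt x, (a11 x * y2 - a21 x * y1) / dt x)"
  have "a11 x * ((y1 * a22 x - y2 * a12 x) / dt x) + a12 x * ((a11 x * y2 - a21 x * y1) / dt x) = y1"
  proof -
    have "a11 x * (y1 * a22 x - y2 * a12 x) + a12 x * (a11 x * y2 - a21 x * y1) = y1 * dt x"
      by (simp add: dt_def algebra_simps)
    then show ?thesis using d by (simp add: field_simps)
  qed
  moreover have "a21 x * ((y1 * a22 x - y2 * a12 x) / dt x) + a22 x * ((a11 x * y2 - a21 x * y1) / dt x) = y2"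
  proof -
    have "a21 x * (y1 * a22 x - y2 * a12 x) + a22 x * (a11 x * y2 - a21 x * y1) = y2 * dt x"
      by (simp add: dt_def algebra_simps)
    then show ?thesis using d by (simp add: field_simps)
  qed
  ultimately show ?thesis
    by (intro exI[of _ v]) (simp add: v_def D1_expand[OF x])
qed

lemma sff_val:
  assumes x: "x \<in> V"
  shows "(THE t. D2 F x v w - t *\<^sub>R xi \<in> range (D1 F x)) =
     snd (snd (D2 F x v w)) - (q1 x * fst (D2 F x v w) + q2 x * fst (snd (D2 F x v w)))"
proof (rule the_equality)
  let ?t = "snd (snd (D2 F x v w)) - (q1 x * fst (D2 F x v w) + q2 x * fst (snd (D2 F x v w)))"
  obtain a where a: "fst (D1 F x a) = fst (D2 F x v w)" "fst (snd (D1 F x a)) = fst (snd (D2 F x v w))"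
    using surjP[OF x] by blast
  have "D2 F x v w - ?t *\<^sub>R xi = D1 F x a"
    using a key1[OF x, of a] by (simp add: prod_eq_iff xi_def)
  then show "D2 F x v w - ?t *\<^sub>R xi \<in> range (D1 F x)" by (metis rangeI)
next
  fix t assume "D2 F x v w - t *\<^sub>R xi \<in> range (D1 F x)"
  then obtain b where b: "D2 F x v w - t *\<^sub>R xi = D1 F x b" by auto
  then have "fst (D1 F x b) = fst (D2 F x v w)" "fst (snd (D1 F x b)) = fst (snd (D2 F x v w))"
     "snd (snd (D1 F x b)) = snd (snd (D2 F x v w)) - t"
    by (auto simp: xi_def dest!: sym[of _ "D1 F x b"])
  with key1[OF x, of b] show "t = snd (snd (D2 F x v w)) - (q1 x * fst (D2 F x v w) + q2 x * fst (snd (D2 F x v w)))"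
    by simp
qed

lemma hQ:
  assumes x: "x \<in> V"
  shows "Q1 x v = L x * fst (D1 F x v) \<and> Q2 x v = L x * fst (snd (D1 F x v))"
proof -
  have E: "Q1 x v * fst (D1 F x w) + Q2 x v * fst (snd (D1 F x w)) =
      L x * (fst (D1 F x v) * fst (D1 F x w) + fst (snd (D1 F x v)) * fst (snd (D1 F x w)))" for w
  proof -
    have "(THE t. D2 F x v w - t *\<^sub>R xi \<in> range (D1 F x)) = L x * dform (D1 F x v) (D1 F x w)"
      using um x by blast
    then show ?thesis using sff_val[OF x, of v w] deriv_id[OF x, of v w] unfolding dform_def
      by (simp add: algebra_simps)
  qed
  obtain w where w: "fst (D1 F x w) = Q1 x v - L x * fst (D1 F x v)"
     "fst (snd (D1 F x w)) = Q2 x v - L x * fst (snd (D1 F x v))"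
    using surjP[OF x] by blast
  have "(Q1 x v - L x * fst (D1 F x v))^2 + (Q2 x v - L x * fst (snd (D1 F x v)))^2 = 0"
    using E[of w] unfolding w by (simp add: power2_eq_square algebra_simps)
  then show ?thesis by (simp add: sum_power2_eq_zero_iff)
qed


lemma D2_sym:
  assumes x: "x \<in> V"
  shows "fst (D2 F x (1,0) (0,1)) = fst (D2 F x (0,1) (1,0))"
    "fst (snd (D2 F x (1,0) (0,1))) = fst (snd (D2 F x (0,1) (1,0)))"
proof -
  show "fst (D2 F x (1,0) (0,1)) = fst (D2 F x (0,1) (1,0))"
    by (rule schwarz[OF V x, where g="\<lambda>y. fst (F y)" and G="\<lambda>y w. fst (D1 F y w)"
         and H="\<lambda>y v w. fst (D2 F y v w)"])
       (use has_derivative_fst[OF dF] d_fst cD2[OF x] in \<open>auto intro!: continuous_add continuous_mult continuous_fst continuous_snd\<close>)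
  show "fst (snd (D2 F x (1,0) (0,1))) = fst (snd (D2 F x (0,1) (1,0)))"
    by (rule schwarz[OF V x, where g="\<lambda>y. fst (snd (F y))" and G="\<lambda>y w. fst (snd (D1 F y w))"
         and H="\<lambda>y v w. fst (snd (D2 F y v w))"])
       (use has_derivative_fst[OF has_derivative_snd[OF dF]] d_fsnd cD2[OF x] in \<open>auto intro!: continuous_add continuous_mult continuous_fst continuous_snd\<close>)
qed

lemma hq1': "y \<in> V \<Longrightarrow> (q1 has_derivative (\<lambda>w. L y * fst (D1 F y w))) (at y)"
proof -
  assume y: "y \<in> V"
  have "Q1 y = (\<lambda>w. L y * fst (D1 F y w))" using hQ[OF y] by auto
  then show ?thesis using hq1[OF y] by simp
qed
lemma hq2': "y \<in> V \<Longrightarrow> (q2 has_derivative (\<lambda>w. L y * fst (snd (D1 F y w)))) (at y)"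
proof -
  assume y: "y \<in> V"
  have "Q2 y = (\<lambda>w. L y * fst (snd (D1 F y w)))" using hQ[OF y] by auto
  then show ?thesis using hq2[OF y] by simp
qed

lemma DL_zero:
  assumes x: "x \<in> V"
  shows "D1 L x = (\<lambda>v. 0)"
proof -
  have S1: "D1 L x (1,0) * fst (D1 F x (0,1)) + L x * fst (D2 F x (1,0) (0,1)) =
            D1 L x (0,1) * fst (D1 F x (1,0)) + L x * fst (D2 F x (0,1) (1,0))"
  proof (rule schwarz[OF V x, where g=q1 and G="\<lambda>y w. L y * fst (D1 F y w)"
         and H="\<lambda>y v w. D1 L y v * fst (D1 F y w) + L y * fst (D2 F y v w)"])
    show "\<forall>x\<in>V. (q1 has_derivative (\<lambda>w. L x * fst (D1 F x w))) (at x)" using hq1' by blast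
    show "\<forall>x\<in>V. \<forall>w. ((\<lambda>y. L y * fst (D1 F y w)) has_derivative
            (\<lambda>v. D1 L x v * fst (D1 F x w) + L x * fst (D2 F x v w))) (at x)"
      using has_derivative_mult[OF dL d_fst] by (simp add: algebra_simps)
    show "\<And>v w. isCont (\<lambda>x. D1 L x v * fst (D1 F x w) + L x * fst (D2 F x v w)) x"
      using cDL[OF x] cD1[OF x] cL[OF x] cD2[OF x] by (auto intro!: continuous_add continuous_mult continuous_fst continuous_snd)
  qed
  have S2: "D1 L x (1,0) * fst (snd (D1 F x (0,1))) + L x * fst (snd (D2 F x (1,0) (0,1))) =
            D1 L x (0,1) * fst (snd (D1 F x (1,0))) + L x * fst (snd (D2 F x (0,1) (1,0)))"
  proof (rule schwarz[OF V x, where g=q2 and G="\<lambda>y w. L y * fst (snd (D1 F y w))"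
         and H="\<lambda>y v w. D1 L y v * fst (snd (D1 F y w)) + L y * fst (snd (D2 F y v w))"])
    show "\<forall>x\<in>V. (q2 has_derivative (\<lambda>w. L x * fst (snd (D1 F x w)))) (at x)" using hq2' by blast
    show "\<forall>x\<in>V. \<forall>w. ((\<lambda>y. L y * fst (snd (D1 F y w))) has_derivative
            (\<lambda>v. D1 L x v * fst (snd (D1 F x w)) + L x * fst (snd (D2 F x v w)))) (at x)"
      using has_derivative_mult[OF dL d_fsnd] by (simp add: algebra_simps)
    show "\<And>v w. isCont (\<lambda>x. D1 L x v * fst (snd (D1 F x w)) + L x * fst (snd (D2 F x v w))) x"
      using cDL[OF x] cD1[OF x] cL[OF x] cD2[OF x] by (auto intro!: continuous_add continuous_mult continuous_fst continuous_snd)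
  qed
  define \<alpha> where "\<alpha> = D1 L x (1,0)"
  define \<beta> where "\<beta> = D1 L x (0,1)"
  have e1: "\<alpha> * a12 x = \<beta> * a11 x" using S1 D2_sym[OF x] unfolding \<alpha>_def \<beta>_def a12_def a11_def by simp
  have e2: "\<alpha> * a22 x = \<beta> * a21 x" using S2 D2_sym[OF x] unfolding \<alpha>_def \<beta>_def a22_def a21_def by simp
  have "\<alpha> * dt x = 0"
  proof -
    have "\<alpha> * dt x = a11 x * (\<alpha> * a22 x) - a21 x * (\<alpha> * a12 x)" by (simp add: dt_def algebra_simps)
    also have "\<dots> = 0" using e1 e2 by (simp add: algebra_simps)
    finally show ?thesis .
  qed
  moreover have "\<beta> * dt x = 0"
  proof -
    have "\<beta> * dt x = a22 x * (\<beta> * a11 x) - a12 x * (\<beta> * a21 x)" by (simp add: dt_def algebra_simps)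
    also have "\<dots> = a22 x * (\<alpha> * a12 x) - a12 x * (\<alpha> * a22 x)" using e1 e2 by simp
    also have "\<dots> = 0" by (simp add: algebra_simps)
    finally show ?thesis .
  qed
  ultimately have "\<alpha> = 0" "\<beta> = 0" using dt_nz[OF x] by auto
  show ?thesis
  proof
    fix v :: "real \<times> real"
    obtain v1 v2 where v: "v = (v1, v2)" by fastforce
    show "D1 L x v = 0" unfolding v lin2[OF linL[OF x], of v1 v2] using \<open>\<alpha> = 0\<close> \<open>\<beta> = 0\<close>
      unfolding \<alpha>_def \<beta>_def by simp
  qed
qed

end



context chart_ctx begin

abbreviation "XX y \<equiv> fst (F y)"
abbreviation "YY y \<equiv> fst (snd (F y))"
abbreviation "ZZ y \<equiv> snd (snd (F y))"

lemma dX: "y \<in> V \<Longrightarrow> ((\<lambda>y. fst (F y)) has_derivative (\<lambda>h. fst (D1 F y h))) (at y)"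
  using has_derivative_fst[OF dF] by blast
lemma dY: "y \<in> V \<Longrightarrow> ((\<lambda>y. fst (snd (F y))) has_derivative (\<lambda>h. fst (snd (D1 F y h)))) (at y)"
  using has_derivative_fst[OF has_derivative_snd[OF dF]] by blast
lemma dZ: "y \<in> V \<Longrightarrow> ((\<lambda>y. snd (snd (F y))) has_derivative (\<lambda>h. snd (snd (D1 F y h)))) (at y)"
  using has_derivative_snd[OF has_derivative_snd[OF dF]] by blast

lemma local_par:
  assumes x: "x \<in> V" and kc: "\<forall>y\<in>V. L y = k"
  shows "\<exists>r>0. ball x r \<subseteq> V \<and> (\<exists>A B C. \<forall>y\<in>ball x r.
     ZZ y = k / 2 * ((XX y)\<^sup>2 + (YY y)\<^sup>2) + A * XX y + B * YY y + C)"
proof -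
  obtain r where r: "r > 0" "ball x r \<subseteq> V" using V x openE by blast
  have "\<exists>c. \<forall>y\<in>ball x r. q1 y - k * XX y = c"
  proof (rule has_derivative_zero_constant[OF convex_ball])
    fix y assume y: "y \<in> ball x r"
    then have yV: "y \<in> V" using r by blast
    have "((\<lambda>y. q1 y - k * XX y) has_derivative (\<lambda>h. L y * fst (D1 F y h) - k * fst (D1 F y h))) (at y)"
      using has_derivative_diff[OF hq1'[OF yV] has_derivative_mult[OF has_derivative_const dX[OF yV]]]
      by simp
    then show "((\<lambda>y. q1 y - k * XX y) has_derivative (\<lambda>h. 0)) (at y within ball x r)"
      using kc yV by (simp add: has_derivative_at_withinI)
  qed
  then obtain c1 where c1: "\<forall>y\<in>ball x r. q1 y - k * XX y = c1" by blast
  have "\<exists>c. \<forall>y\<in>ball x r. q2 y - k * YY y = c"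
  proof (rule has_derivative_zero_constant[OF convex_ball])
    fix y assume y: "y \<in> ball x r"
    then have yV: "y \<in> V" using r by blast
    have "((\<lambda>y. q2 y - k * YY y) has_derivative (\<lambda>h. L y * fst (snd (D1 F y h)) - k * fst (snd (D1 F y h)))) (at y)"
      using has_derivative_diff[OF hq2'[OF yV] has_derivative_mult[OF has_derivative_const dY[OF yV]]]
      by simp
    then show "((\<lambda>y. q2 y - k * YY y) has_derivative (\<lambda>h. 0)) (at y within ball x r)"
      using kc yV by (simp add: has_derivative_at_withinI)
  qed
  then obtain c2 where c2: "\<forall>y\<in>ball x r. q2 y - k * YY y = c2" by blast
  have "\<exists>c. \<forall>y\<in>ball x r. ZZ y - k / 2 * (XX y * XX y + YY y * YY y) - c1 * XX y - c2 * YY y = c"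
  proof (rule has_derivative_zero_constant[OF convex_ball])
    fix y assume y: "y \<in> ball x r"
    then have yV: "y \<in> V" using r by blast
    have D: "((\<lambda>y. ZZ y - k / 2 * (XX y * XX y + YY y * YY y) - c1 * XX y - c2 * YY y) has_derivative
       (\<lambda>h. snd (snd (D1 F y h)) - k / 2 * ((XX y * fst (D1 F y h) + fst (D1 F y h) * XX y)
            + (YY y * fst (snd (D1 F y h)) + fst (snd (D1 F y h)) * YY y))
            - c1 * fst (D1 F y h) - c2 * fst (snd (D1 F y h)))) (at y)"
      by (intro has_derivative_diff has_derivative_mult_right has_derivative_mult has_derivative_add has_derivative_const dX[OF yV] dY[OF yV] dZ[OF yV])
    have "(\<lambda>h. snd (snd (D1 F y h)) - k / 2 * ((XX y * fst (D1 F y h) + fst (D1 F y h) * XX y)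
            + (YY y * fst (snd (D1 F y h)) + fst (snd (D1 F y h)) * YY y))
            - c1 * fst (D1 F y h) - c2 * fst (snd (D1 F y h))) = (\<lambda>h. 0)"
    proof
      fix h
      have "q1 y = c1 + k * XX y" "q2 y = c2 + k * YY y" using c1 c2 y by (metis add_diff_cancel_left' diff_add_cancel add.commute)+
      then show "snd (snd (D1 F y h)) - k / 2 * ((XX y * fst (D1 F y h) + fst (D1 F y h) * XX y)
            + (YY y * fst (snd (D1 F y h)) + fst (snd (D1 F y h)) * YY y))
            - c1 * fst (D1 F y h) - c2 * fst (snd (D1 F y h)) = 0"
        using key1[OF yV, of h] by (simp add: algebra_simps)
    qed
    then show "((\<lambda>y. ZZ y - k / 2 * (XX y * XX y + YY y * YY y) - c1 * XX y - c2 * YY y) has_derivative (\<lambda>h. 0)) (at y within ball x r)"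
      using D by (simp add: has_derivative_at_withinI)
  qed
  then obtain C where C: "\<forall>y\<in>ball x r. ZZ y - k / 2 * (XX y * XX y + YY y * YY y) - c1 * XX y - c2 * YY y = C" by blast
  have "\<forall>y\<in>ball x r. ZZ y = k / 2 * ((XX y)\<^sup>2 + (YY y)\<^sup>2) + c1 * XX y + c2 * YY y + C"
    using C by (auto simp: power2_eq_square algebra_simps)
  then show ?thesis using r by blast
qed

lemma P_open:
  assumes x: "x \<in> V"
  shows "(XX x, YY x) \<in> interior ((\<lambda>y. (XX y, YY y)) ` V)"
proof -
  have d: "dt x \<noteq> 0" using dt_nz x by blast
  define g' where "g' = (\<lambda>y::real\<times>real. ((fst y * a22 x - snd y * a12 x) / dt x, (a11 x * snd y - a21 x * fst y) / dt x))"
  have "linear g'" unfolding g'_def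
    by (rule linearI) (auto simp: algebra_simps add_divide_distrib diff_divide_distrib)
  then have bl: "bounded_linear g'" by (simp add: linear_conv_bounded_linear)
  have "(\<lambda>v. (fst (D1 F x v), fst (snd (D1 F x v)))) \<circ> g' = id"
  proof
    fix y :: "real \<times> real"
    obtain y1 y2 where yy: "y = (y1, y2)" by fastforce
    have "a11 x * ((y1 * a22 x - y2 * a12 x) / dt x) + a12 x * ((a11 x * y2 - a21 x * y1) / dt x) = y1"
    proof -
      have "a11 x * (y1 * a22 x - y2 * a12 x) + a12 x * (a11 x * y2 - a21 x * y1) = y1 * dt x"
        by (simp add: dt_def algebra_simps)
      then show ?thesis using d by (simp add: field_simps)
    qed
    moreover have "a21 x * ((y1 * a22 x - y2 * a12 x) / dt x) + a22 x * ((a11 x * y2 - a21 x * y1) / dt x) = y2"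
    proof -
      have "a21 x * (y1 * a22 x - y2 * a12 x) + a22 x * (a11 x * y2 - a21 x * y1) = y2 * dt x"
        by (simp add: dt_def algebra_simps)
      then show ?thesis using d by (simp add: field_simps)
    qed
    ultimately show "((\<lambda>v. (fst (D1 F x v), fst (snd (D1 F x v)))) \<circ> g') y = id y"
      by (simp add: yy g'_def D1_expand[OF x])
  qed
  moreover have "((\<lambda>y. (XX y, YY y)) has_derivative (\<lambda>v. (fst (D1 F x v), fst (snd (D1 F x v))))) (at x)"
    using has_derivative_Pair[OF dX[OF x] dY[OF x]] .
  moreover have "continuous_on V (\<lambda>y. (XX y, YY y))"
  proof (rule continuous_at_imp_continuous_on, rule ballI)
    fix y assume "y \<in> V"
    from has_derivative_continuous[OF has_derivative_Pair[OF dX[OF this] dY[OF this]]]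
    show "isCont (\<lambda>y. (XX y, YY y)) y" .
  qed
  ultimately show ?thesis
    using sussmann_open_mapping[OF V _ x _ bl, of "\<lambda>y. (XX y, YY y)" _ V] V x
    by (simp add: interior_open)
qed

lemma par_unique:
  assumes x: "x \<in> V" and W: "open W" "x \<in> W" "W \<subseteq> V"
    and h1: "\<forall>y\<in>W. ZZ y = k / 2 * ((XX y)\<^sup>2 + (YY y)\<^sup>2) + A * XX y + B * YY y + C"
    and h2: "\<forall>y\<in>W. ZZ y = k / 2 * ((XX y)\<^sup>2 + (YY y)\<^sup>2) + A' * XX y + B' * YY y + C'"
  shows "A = A' \<and> B = B' \<and> C = C'"
proof -
  have z: "\<forall>y\<in>W. (A - A') * XX y + (B - B') * YY y + (C - C') = 0"
    using h1 h2 by (auto simp: algebra_simps)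
  have D: "((\<lambda>y. (A - A') * XX y + (B - B') * YY y + (C - C')) has_derivative
     (\<lambda>h. (A - A') * fst (D1 F x h) + (B - B') * fst (snd (D1 F x h)))) (at x)"
    using has_derivative_add[OF has_derivative_add[OF has_derivative_mult[OF has_derivative_const dX[OF x]]
         has_derivative_mult[OF has_derivative_const dY[OF x]]] has_derivative_const]
    by simp
  have "((\<lambda>y. (A - A') * XX y + (B - B') * YY y + (C - C')) has_derivative (\<lambda>h. 0)) (at x)"
    by (rule has_derivative_transform_within_open[OF has_derivative_const W(1) W(2)]) (use z in auto)
  from has_derivative_unique[OF D this]
  have E: "\<And>h. (A - A') * fst (D1 F x h) + (B - B') * fst (snd (D1 F x h)) = 0" by meson
  obtain h where "fst (D1 F x h) = A - A'" "fst (snd (D1 F x h)) = B - B'" using surjP[OF x] by blast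
  with E[of h] have "(A - A')^2 + (B - B')^2 = 0" by (simp add: power2_eq_square)
  then have "A = A'" "B = B'" by (simp_all add: sum_power2_eq_zero_iff)
  moreover have "(A - A') * XX x + (B - B') * YY x + (C - C') = 0" using z W(2) by blast
  ultimately show ?thesis by simp
qed

end



lemma chart_props:
  assumes "is_chart c"
  shows "open (fst c)" "open (snd c ` fst c)" "inj_on (snd c) (fst c)"
    "continuous_on (fst c) (snd c)" "continuous_on (snd c ` fst c) (inv_into (fst c) (snd c))"
  using assms unfolding is_chart_def Let_def by auto

lemma chart_vimage_open:
  assumes "is_chart c" "open B"
  shows "open (fst c \<inter> snd c -` B)"
proof -
  have "open (snd c -` B \<inter> fst c)"
    using chart_props[OF assms(1)] assms(2) continuous_on_open_vimage by blast
  then show ?thesis by (simp add: Int_commute)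
qed

lemma chart_image_open:
  assumes c: "is_chart c" and S: "open S" "S \<subseteq> fst c"
  shows "open (snd c ` S)"
proof -
  note cp = chart_props[OF c]
  have eq: "snd c ` S = inv_into (fst c) (snd c) -` S \<inter> snd c ` fst c"
  proof
    show "snd c ` S \<subseteq> inv_into (fst c) (snd c) -` S \<inter> snd c ` fst c"
      using S(2) cp(3) by (auto simp: inv_into_f_f)
    show "inv_into (fst c) (snd c) -` S \<inter> snd c ` fst c \<subseteq> snd c ` S"
    proof
      fix y assume y: "y \<in> inv_into (fst c) (snd c) -` S \<inter> snd c ` fst c"
      then have "y = snd c (inv_into (fst c) (snd c) y)" by (auto simp: f_inv_into_f)
      then show "y \<in> snd c ` S" using y by blast
    qed
  qed
  show ?thesis unfolding eq using cp(2,5) S(1) continuous_on_open_vimage by blast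
qed

lemma graph_openin:
  fixes h :: "real \<Rightarrow> real \<Rightarrow> real"
  assumes sub: "S \<subseteq> {(u, v, h u v) | u v. True}"
    and op: "open ((\<lambda>q. (fst q, fst (snd q))) ` S)"
  shows "openin (top_of_set {(u, v, h u v) | u v. True}) S"
proof -
  let ?\<pi> = "\<lambda>q::real \<times> real \<times> real. (fst q, fst (snd q))"
  have o: "open (?\<pi> -` (?\<pi> ` S))"
    by (rule continuous_open_vimage[OF op]) (intro continuous_Pair continuous_fst continuous_snd continuous_ident)
  have "S = {(u, v, h u v) | u v. True} \<inter> ?\<pi> -` (?\<pi> ` S)"
  proof
    show "S \<subseteq> {(u, v, h u v) | u v. True} \<inter> ?\<pi> -` (?\<pi> ` S)" using sub by auto
    show "{(u, v, h u v) | u v. True} \<inter> ?\<pi> -` (?\<pi> ` S) \<subseteq> S"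
    proof
      fix q assume q: "q \<in> {(u, v, h u v) | u v. True} \<inter> ?\<pi> -` (?\<pi> ` S)"
      then obtain u v where quv: "q = (u, v, h u v)" by blast
      from q obtain s where s: "s \<in> S" "?\<pi> s = ?\<pi> q" by auto
      from s(1) sub obtain u' v' where "s = (u', v', h u' v')" by blast
      with s(2) quv have "s = q" by simp
      with s(1) show "q \<in> S" by simp
    qed
  qed
  then show ?thesis unfolding openin_open using o by blast
qed




theorem mainTheorem2:
  fixes \<A> :: "('m::{t2_space, second_countable_topology} set \<times> ('m \<Rightarrow> real \<times> real)) set"
    and f :: "'m \<Rightarrow> real \<times> real \<times> real"
    and lam :: "'m \<Rightarrow> real"
  assumes atlas: "smooth_atlas \<A>"
    and conn: "connected (UNIV :: 'm set)"
    and nondeg: "nondeg_immersion \<A> f"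
    and lam_smooth: "smooth_map \<A> lam"
    and umbilic: "\<forall>c\<in>\<A>. \<forall>x\<in>snd c ` fst c. \<forall>v w.
                    sff c f x v w = lam (inv_into (fst c) (snd c) x) * ind_metric c f x v w"
    and not_tg: "\<exists>c\<in>\<A>. \<exists>x\<in>snd c ` fst c. \<exists>v w. sff c f x v w \<noteq> 0"
  shows "\<exists>k. k \<noteq> 0 \<and> (\<forall>p. lam p = k) \<and>
           (\<exists>A B C. range f \<subseteq> {(u, v, k / 2 * (u\<^sup>2 + v\<^sup>2) + A * u + B * v + C) | u v. True} \<and>
              openin (top_of_set {(u, v, k / 2 * (u\<^sup>2 + v\<^sup>2) + A * u + B * v + C) | u v. True}) (range f)) \<and>
           (\<exists>\<Phi>. affine_isometry \<Phi> \<and>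
              \<Phi> ` range f \<subseteq> {(u, v, u\<^sup>2 + v\<^sup>2) | u v. True} \<and>
              openin (top_of_set {(u, v, u\<^sup>2 + v\<^sup>2) | u v. True}) (\<Phi> ` range f))"
proof -
  have chart: "\<And>c. c \<in> \<A> \<Longrightarrow> is_chart c" using atlas unfolding smooth_atlas_def by blast
  have cover: "\<And>p. \<exists>c\<in>\<A>. p \<in> fst c" using atlas unfolding smooth_atlas_def by blast
  have ctx: "chart_ctx (snd c ` fst c) (loc c f) (lam \<circ> inv_into (fst c) (snd c))" if c: "c \<in> \<A>" for c
  proof
    show "open (snd c ` fst c)" using chart_props(2)[OF chart[OF c]] .
    show "smooth_on_R2 (snd c ` fst c) (loc c f)"
    proof -
      have "immersion \<A> f" using nondeg unfolding nondeg_immersion_def by (rule conjunct1)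
      then have "smooth_map \<A> f" unfolding immersion_def by (rule conjunct1)
      then show ?thesis using c unfolding smooth_map_def loc_def by (rule bspec)
    qed
    show "smooth_on_R2 (snd c ` fst c) (lam \<circ> inv_into (fst c) (snd c))"
      using lam_smooth c unfolding smooth_map_def by (rule bspec)
    show "\<forall>x\<in>snd c ` fst c. \<forall>v. v \<noteq> 0 \<longrightarrow> 0 < dform (D1 (loc c f) x v) (D1 (loc c f) x v)"
    proof -
      have "\<forall>c\<in>\<A>. \<forall>x\<in>snd c ` fst c. \<forall>v. v \<noteq> 0 \<longrightarrow> ind_metric c f x v v > 0"
        using nondeg unfolding nondeg_immersion_def by (rule conjunct2)
      then show ?thesis using c unfolding ind_metric_def by (rule bspec)
    qed
    show "\<forall>x\<in>snd c ` fst c. \<forall>v w. (THE t. D2 (loc c f) x v w - t *\<^sub>R xi \<in> range (D1 (loc c f) x)) =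
        (lam \<circ> inv_into (fst c) (snd c)) x * dform (D1 (loc c f) x v) (D1 (loc c f) x w)"
    proof (intro ballI allI)
      fix x v w assume x: "x \<in> snd c ` fst c"
      have "sff c f x v w = lam (inv_into (fst c) (snd c) x) * ind_metric c f x v w"
        using umbilic c x by blast
      then show "(THE t. D2 (loc c f) x v w - t *\<^sub>R xi \<in> range (D1 (loc c f) x)) =
        (lam \<circ> inv_into (fst c) (snd c)) x * dform (D1 (loc c f) x v) (D1 (loc c f) x w)"
        unfolding sff_def ind_metric_def o_def .
    qed
  qed
  have inv: "inv_into (fst c) (snd c) (snd c m) = m" if "c \<in> \<A>" "m \<in> fst c" for c m
    using chart_props(3)[OF chart[OF that(1)]] that(2) by (simp add: inv_into_f_f)
  have locf: "loc c f (snd c m) = f m" if "c \<in> \<A>" "m \<in> fst c" for c m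
    using inv[OF that] by (simp add: loc_def)

  have lamloc: "\<exists>T. openin (top_of_set UNIV) T \<and> p \<in> T \<and> (\<forall>m\<in>T. lam m = lam p)" for p
  proof -
    obtain c where c: "c \<in> \<A>" "p \<in> fst c" using cover by blast
    interpret chart_ctx "snd c ` fst c" "loc c f" "lam \<circ> inv_into (fst c) (snd c)" by (rule ctx[OF c(1)])
    define x where "x = snd c p"
    have x: "x \<in> snd c ` fst c" using c x_def by blast
    obtain r where r: "r > 0" "ball x r \<subseteq> snd c ` fst c" using openE[OF V x] by metis
    have "\<exists>C. \<forall>y\<in>ball x r. (lam \<circ> inv_into (fst c) (snd c)) y = C"
    proof (rule has_derivative_zero_constant[OF convex_ball])
      fix y assume "y \<in> ball x r"
      then have y: "y \<in> snd c ` fst c" using r by blast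
      show "((lam \<circ> inv_into (fst c) (snd c)) has_derivative (\<lambda>h. 0)) (at y within ball x r)"
        using dL[OF y] unfolding DL_zero[OF y] by (rule has_derivative_at_withinI)
    qed
    then obtain C where C: "\<forall>y\<in>ball x r. (lam \<circ> inv_into (fst c) (snd c)) y = C" by blast
    define T where "T = fst c \<inter> snd c -` ball x r"
    have "open T" unfolding T_def by (rule chart_vimage_open[OF chart[OF c(1)] open_ball])
    then have oT: "openin (top_of_set UNIV) T" unfolding openin_open by blast
    have pT: "p \<in> T" unfolding T_def x_def using c r by simp
    have "\<forall>m\<in>T. lam m = lam p"
    proof
      fix m assume m: "m \<in> T"
      have mc: "m \<in> fst c" "snd c m \<in> ball x r" using m T_def by auto
      have "lam m = (lam \<circ> inv_into (fst c) (snd c)) (snd c m)" using inv[OF c(1) mc(1)] by simp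
      also have "\<dots> = C" using C mc(2) by blast
      also have "\<dots> = (lam \<circ> inv_into (fst c) (snd c)) (snd c p)" using C r(1) unfolding x_def[symmetric] by simp
      also have "\<dots> = lam p" using inv[OF c] by simp
      finally show "lam m = lam p" .
    qed
    then show ?thesis using oT pT by blast
  qed
  have "lam constant_on UNIV" by (rule locally_constant_imp_constant[OF conn]) (use lamloc in blast)
  then obtain k where k: "\<forall>p. lam p = k" by (auto simp: constant_on_def)
  have k0: "k \<noteq> 0"
  proof
    assume "k = 0"
    from not_tg obtain c x v w where cx: "c \<in> \<A>" "x \<in> snd c ` fst c" "sff c f x v w \<noteq> 0" by blast
    have "sff c f x v w = lam (inv_into (fst c) (snd c) x) * ind_metric c f x v w"
      using umbilic cx(1,2) by blast
    with cx(3) k \<open>k = 0\<close> show False by simp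
  qed


  define Par :: "real \<times> real \<times> real \<Rightarrow> (real \<times> real \<times> real) set" where
    "Par t = {(u, v, k / 2 * (u\<^sup>2 + v\<^sup>2) + fst t * u + fst (snd t) * v + snd (snd t)) | u v. True}" for t
  have Par_mem: "q \<in> Par t \<longleftrightarrow> snd (snd q) = k / 2 * ((fst q)\<^sup>2 + (fst (snd q))\<^sup>2) + fst t * fst q + fst (snd t) * fst (snd q) + snd (snd t)"
    for q t
  proof
    assume "q \<in> Par t" then show "snd (snd q) = k / 2 * ((fst q)\<^sup>2 + (fst (snd q))\<^sup>2) + fst t * fst q + fst (snd t) * fst (snd q) + snd (snd t)"
      unfolding Par_def by auto
  next
    assume h: "snd (snd q) = k / 2 * ((fst q)\<^sup>2 + (fst (snd q))\<^sup>2) + fst t * fst q + fst (snd t) * fst (snd q) + snd (snd t)"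
    obtain u v z where q: "q = (u, v, z)" by (cases q) auto
    show "q \<in> Par t" unfolding Par_def using h q by auto
  qed
  have kc: "\<forall>y\<in>snd c ` fst c. (lam \<circ> inv_into (fst c) (snd c)) y = k" for c
    using k by simp
  define good where "good p t \<longleftrightarrow> (\<exists>T. open T \<and> p \<in> T \<and> (\<forall>m\<in>T. f m \<in> Par t))" for p t
  have ex: "\<exists>t. good p t" for p
  proof -
    obtain c where c: "c \<in> \<A>" "p \<in> fst c" using cover by blast
    interpret chart_ctx "snd c ` fst c" "loc c f" "lam \<circ> inv_into (fst c) (snd c)" by (rule ctx[OF c(1)])
    define x where "x = snd c p"
    have x: "x \<in> snd c ` fst c" using c x_def by blast
    obtain r A B C where r: "r > 0" "ball x r \<subseteq> snd c ` fst c" and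
      par: "\<forall>y\<in>ball x r. snd (snd (loc c f y)) = k / 2 * ((fst (loc c f y))\<^sup>2 + (fst (snd (loc c f y)))\<^sup>2)
              + A * fst (loc c f y) + B * fst (snd (loc c f y)) + C"
      using local_par[OF x kc] by blast
    define T where "T = fst c \<inter> snd c -` ball x r"
    have oT: "open T" unfolding T_def by (rule chart_vimage_open[OF chart[OF c(1)] open_ball])
    have pT: "p \<in> T" unfolding T_def x_def using c r by simp
    have "\<forall>m\<in>T. f m \<in> Par (A, B, C)"
    proof
      fix m assume m: "m \<in> T"
      have mc: "m \<in> fst c" "snd c m \<in> ball x r" using m T_def by auto
      have "loc c f (snd c m) = f m" by (rule locf[OF c(1) mc(1)])
      with par mc(2) show "f m \<in> Par (A, B, C)" unfolding Par_mem by force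
    qed
    then show ?thesis unfolding good_def using oT pT by blast
  qed
  have uniq: "t = t'" if g1: "good p t" and g2: "good p t'" for p t t'
  proof -
    obtain T where T: "open T" "p \<in> T" "\<forall>m\<in>T. f m \<in> Par t" using g1 unfolding good_def by blast
    obtain T' where T': "open T'" "p \<in> T'" "\<forall>m\<in>T'. f m \<in> Par t'" using g2 unfolding good_def by blast
    obtain c where c: "c \<in> \<A>" "p \<in> fst c" using cover by blast
    interpret chart_ctx "snd c ` fst c" "loc c f" "lam \<circ> inv_into (fst c) (snd c)" by (rule ctx[OF c(1)])
    define S where "S = T \<inter> T' \<inter> fst c"
    have oS: "open S" unfolding S_def using T(1) T'(1) chart_props(1)[OF chart[OF c(1)]] by blast
    have W: "open (snd c ` S)" by (rule chart_image_open[OF chart[OF c(1)] oS]) (auto simp: S_def)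
    have x: "snd c p \<in> snd c ` fst c" using c by blast
    have xW: "snd c p \<in> snd c ` S" unfolding S_def using T(2) T'(2) c(2) by blast
    have WV: "snd c ` S \<subseteq> snd c ` fst c" unfolding S_def by blast
    have h: "\<forall>y\<in>snd c ` S. loc c f y \<in> Par t \<and> loc c f y \<in> Par t'"
    proof
      fix y assume "y \<in> snd c ` S"
      then obtain m where m: "m \<in> S" "y = snd c m" by blast
      then have "loc c f y = f m" using locf[OF c(1)] S_def by blast
      then show "loc c f y \<in> Par t \<and> loc c f y \<in> Par t'" using T(3) T'(3) m(1) S_def by auto
    qed
    have "fst t = fst t' \<and> fst (snd t) = fst (snd t') \<and> snd (snd t) = snd (snd t')"
      by (rule par_unique[OF x W xW WV]) (use h in \<open>auto simp: Par_mem\<close>)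
    then show ?thesis by (simp add: prod_eq_iff)
  qed
  define T0 where "T0 p = (SOME t. good p t)" for p
  have gT0: "good p (T0 p)" for p unfolding T0_def using ex[of p] by (rule someI_ex)
  have "T0 constant_on UNIV"
  proof (rule locally_constant_imp_constant[OF conn])
    fix p :: 'm
    obtain T where T: "open T" "p \<in> T" "\<forall>m\<in>T. f m \<in> Par (T0 p)" using gT0[of p] unfolding good_def by blast
    have "\<forall>m\<in>T. T0 m = T0 p"
    proof
      fix m assume "m \<in> T"
      then have "good m (T0 p)" unfolding good_def using T by blast
      then show "T0 m = T0 p" using uniq gT0 by blast
    qed
    moreover have "openin (top_of_set UNIV) T" unfolding openin_open using T(1) by blast
    ultimately show "\<exists>T. openin (top_of_set UNIV) T \<and> p \<in> T \<and> (\<forall>x\<in>T. T0 x = T0 p)" using T(2) by blast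
  qed
  then obtain t where t: "\<forall>p. T0 p = t" unfolding constant_on_def by blast
  have sub: "range f \<subseteq> Par t"
  proof
    fix q assume "q \<in> range f"
    then obtain p where p: "q = f p" by blast
    have "good p t" using gT0[of p] t by simp
    then obtain T where T: "open T" "p \<in> T" "\<forall>m\<in>T. f m \<in> Par t" unfolding good_def by blast
    have "f p \<in> Par t" using T(2,3) by blast
    then show "q \<in> Par t" using p by simp
  qed

  let ?\<pi> = "\<lambda>q::real \<times> real \<times> real. (fst q, fst (snd q))"
  have opi: "open (?\<pi> ` range f)"
  proof (rule open_subopen[THEN iffD2], rule ballI)
    fix z assume "z \<in> ?\<pi> ` range f"
    then obtain p where p: "z = ?\<pi> (f p)" by auto
    obtain c where c: "c \<in> \<A>" "p \<in> fst c" using cover by blast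
    interpret chart_ctx "snd c ` fst c" "loc c f" "lam \<circ> inv_into (fst c) (snd c)" by (rule ctx[OF c(1)])
    have x: "snd c p \<in> snd c ` fst c" using c(2) by (rule imageI)
    have I: "(fst (loc c f (snd c p)), fst (snd (loc c f (snd c p))))
          \<in> interior ((\<lambda>y. (fst (loc c f y), fst (snd (loc c f y)))) ` (snd c ` fst c))"
      by (rule P_open[OF x])
    have e: "loc c f (snd c p) = f p" by (rule locf[OF c])
    have s: "(\<lambda>y. (fst (loc c f y), fst (snd (loc c f y)))) ` (snd c ` fst c) \<subseteq> ?\<pi> ` range f"
    proof
      fix z assume "z \<in> (\<lambda>y. (fst (loc c f y), fst (snd (loc c f y)))) ` (snd c ` fst c)"
      then obtain m where m: "m \<in> fst c" "z = (fst (loc c f (snd c m)), fst (snd (loc c f (snd c m))))" by auto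
      have "loc c f (snd c m) = f m" by (rule locf[OF c(1) m(1)])
      then have "z = ?\<pi> (f m)" using m(2) by simp
      then show "z \<in> ?\<pi> ` range f" by auto
    qed
    have zI: "z \<in> interior ((\<lambda>y. (fst (loc c f y), fst (snd (loc c f y)))) ` (snd c ` fst c))"
      using I unfolding e p by simp
    have "interior ((\<lambda>y. (fst (loc c f y), fst (snd (loc c f y)))) ` (snd c ` fst c)) \<subseteq> ?\<pi> ` range f"
      using s interior_subset by (rule order_trans[rotated])
    then show "\<exists>T. open T \<and> z \<in> T \<and> T \<subseteq> ?\<pi> ` range f"
      using zI open_interior by blast
  qed

  define A where "A = fst t"
  define B where "B = fst (snd t)"
  define C where "C = snd (snd t)"
  have ParE: "Par t = {(u, v, k / 2 * (u\<^sup>2 + v\<^sup>2) + A * u + B * v + C) | u v. True}"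
    unfolding Par_def A_def B_def C_def ..
  have part1: "range f \<subseteq> {(u, v, k / 2 * (u\<^sup>2 + v\<^sup>2) + A * u + B * v + C) | u v. True} \<and>
      openin (top_of_set {(u, v, k / 2 * (u\<^sup>2 + v\<^sup>2) + A * u + B * v + C) | u v. True}) (range f)"
  proof
    show s1: "range f \<subseteq> {(u, v, k / 2 * (u\<^sup>2 + v\<^sup>2) + A * u + B * v + C) | u v. True}"
      using sub unfolding ParE .
    show "openin (top_of_set {(u, v, k / 2 * (u\<^sup>2 + v\<^sup>2) + A * u + B * v + C) | u v. True}) (range f)"
      by (rule graph_openin[OF s1 opi])
  qed

  define b1 where "b1 = A / k"
  define b2 where "b2 = B / k"
  define b3 where "b3 = (A\<^sup>2 + B\<^sup>2) / k\<^sup>2 - 2 * C / k"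
  define \<Phi> :: "real \<times> real \<times> real \<Rightarrow> real \<times> real \<times> real" where
    "\<Phi> = (\<lambda>(x, y, z). (1 * x + 0 * y + b1, 0 * x + 1 * y + b2, 0 * x + 0 * y + (2 / k) * z + b3))"
  have aff: "affine_isometry \<Phi>"
    unfolding affine_isometry_def
    apply (rule exI[of _ 1], rule exI[of _ 0], rule exI[of _ 0], rule exI[of _ 1], rule exI[of _ 0],
           rule exI[of _ 0], rule exI[of _ "2 / k"], rule exI[of _ b1], rule exI[of _ b2], rule exI[of _ b3])
    using k0 unfolding \<Phi>_def by simp
  have s2: "\<Phi> ` range f \<subseteq> {(u, v, u\<^sup>2 + v\<^sup>2) | u v. True}"
  proof
    fix q assume "q \<in> \<Phi> ` range f"
    then obtain p where p: "p \<in> range f" "q = \<Phi> p" by blast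
    then obtain u v where uv: "p = (u, v, k / 2 * (u\<^sup>2 + v\<^sup>2) + A * u + B * v + C)" using part1 by blast
    have "2 / k * (k / 2 * (u\<^sup>2 + v\<^sup>2) + A * u + B * v + C) + b3 = (u + b1)\<^sup>2 + (v + b2)\<^sup>2"
      using k0 unfolding b1_def b2_def b3_def by (simp add: field_simps power2_eq_square)
    then have "q = (u + b1, v + b2, (u + b1)\<^sup>2 + (v + b2)\<^sup>2)" using p(2) uv unfolding \<Phi>_def by simp
    then show "q \<in> {(u, v, u\<^sup>2 + v\<^sup>2) | u v. True}" by blast
  qed
  have eq: "?\<pi> \<circ> \<Phi> = (\<lambda>z. (b1, b2) + z) \<circ> ?\<pi>" unfolding \<Phi>_def by (auto simp: fun_eq_iff)
  have eqimg: "?\<pi> ` (\<Phi> ` range f) = (\<lambda>z. (b1, b2) + z) ` (?\<pi> ` range f)"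
  proof -
    have "?\<pi> ` (\<Phi> ` range f) = (?\<pi> \<circ> \<Phi>) ` range f" by (rule image_comp)
    also have "\<dots> = ((\<lambda>z. (b1, b2) + z) \<circ> ?\<pi>) ` range f" unfolding eq ..
    also have "\<dots> = (\<lambda>z. (b1, b2) + z) ` (?\<pi> ` range f)" by (rule image_comp[symmetric])
    finally show ?thesis .
  qed
  have o3: "open ((\<lambda>z. (b1, b2) + z) ` (?\<pi> ` range f))" by (rule open_translation[OF opi])
  have "open (?\<pi> ` (\<Phi> ` range f))" using o3 eqimg by (simp only:)
  from graph_openin[OF s2 this] have o2: "openin (top_of_set {(u, v, u\<^sup>2 + v\<^sup>2) | u v. True}) (\<Phi> ` range f)" .
  show ?thesis using k0 k part1 aff s2 o2 by blast
qed

end
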